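(* Let $m,n\ge 1$ and let $$K=\begin{bmatrix} A & B^T\\ B & -C\end{bmatrix}\in\mathbb{R}^{(m+n)\times(m+n)},$$ where $A\in\mathbb{R}^{m\times m}$ is symmetric positive definite, $B\in\mathbb{R}^{n\times m}$ has rank $n$, and $C\in\mathbb{R}^{n\times n}$ is symmetric positive semidefinite. Let $K=LJ_{m+n}L^T$ be a generalized Cholesky factorization of $K$. Let $\Delta K\in\mathbb{R}^{(m+n)\times(m+n)}$ be symmetric and suppose $$\|L^{-1}\|_2^2\,\|\Delta K\|_F<\tfrac12 .$$ Then $K+\Delta K$ has a generalized Cholesky factorization $$K+\Delta K=(L+\Delta L)J_{m+n}(L+\Delta L)^T,$$ where $L+\Delta L$ has the same block lower-triangular structure as $L$, and $$\|\Delta L\|_F\le \frac{\sqrt2\,\|L^{-1}\|_2\left[\inf_{D\in\mathbb{D}_{m+n}}\kappa_2(LD^{-1})\right]}{\sqrt2-1+\sqrt{1-2\|L^{-1}\|_2^2\|\Delta K\|_F}}\,\|\Delta K\|_F\le (2+\sqrt2)\,\|L^{-1}\|_2\left[\inf_{D\in\mathbb{D}_{m+n}}\kappa_2(LD^{-1})\right]\|\Delta K\|_F .$$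
   Context: $J_{m+n}=\begin{bmatrix} I_m&0\\0&-I_n\end{bmatrix}$. A generalized Cholesky factorization of a matrix $M\in\mathbb{R}^{(m+n)\times(m+n)}$ is a factorization $M=LJ_{m+n}L^T$ with $L=\begin{bmatrix}L_{11}&0\\L_{21}&L_{22}\end{bmatrix}$, where $L_{11}\in\mathbb{R}^{m\times m}$ and $L_{22}\in\mathbb{R}^{n\times n}$ are nonsingular lower triangular and $L_{21}\in\mathbb{R}^{n\times m}$ (so $L$ is nonsingular lower triangular); $L$ is called a generalized Cholesky factor. $\|\cdot\|_2$ is the spectral norm, $\|\cdot\|_F$ the Frobenius norm, $\kappa_2(X)=\|X\|_2\|X^{-1}\|_2$ for nonsingular $X$. $\mathbb{D}_{m+n}$ denotes the set of $(m+n)\times(m+n)$ diagonal matrices with positive diagonal entries. *)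

theory Defs
  imports "Jordan_Normal_Form.Matrix" "Jordan_Normal_Form.DL_Rank"
begin

definition symmetric_mat :: "real mat \<Rightarrow> bool" where
  "symmetric_mat A \<longleftrightarrow> square_mat A \<and> transpose_mat A = A"

definition pos_def_mat :: "real mat \<Rightarrow> bool" where
  "pos_def_mat A \<longleftrightarrow> square_mat A \<and> symmetric_mat A \<and>
     (\<forall>x \<in> carrier_vec (dim_row A). x \<noteq> 0\<^sub>v (dim_row A) \<longrightarrow> x \<bullet> (A *\<^sub>v x) > 0)"

definition pos_semidef_mat :: "real mat \<Rightarrow> bool" where
  "pos_semidef_mat A \<longleftrightarrow> square_mat A \<and> symmetric_mat A \<and>
     (\<forall>x \<in> carrier_vec (dim_row A). x \<bullet> (A *\<^sub>v x) \<ge> 0)"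

definition lower_triangular_mat :: "real mat \<Rightarrow> bool" where
  "lower_triangular_mat A \<longleftrightarrow> (\<forall>i<dim_row A. \<forall>j<dim_col A. i < j \<longrightarrow> A $$ (i,j) = 0)"

definition inv_mat :: "real mat \<Rightarrow> real mat" where
  "inv_mat A = (SOME B. inverts_mat A B \<and> inverts_mat B A)"

definition vnorm2 :: "real vec \<Rightarrow> real" where
  "vnorm2 x = sqrt (x \<bullet> x)"

definition spec_norm :: "real mat \<Rightarrow> real" where
  "spec_norm A = Sup {vnorm2 (A *\<^sub>v x) | x. x \<in> carrier_vec (dim_col A) \<and> vnorm2 x = 1}"

definition frob_norm :: "real mat \<Rightarrow> real" where
  "frob_norm A = sqrt (\<Sum>i<dim_row A. \<Sum>j<dim_col A. (A $$ (i,j))\<^sup>2)"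

definition kappa2 :: "real mat \<Rightarrow> real" where
  "kappa2 X = spec_norm X * spec_norm (inv_mat X)"

definition pos_diag_mats :: "nat \<Rightarrow> real mat set" where
  "pos_diag_mats N = {D. D \<in> carrier_mat N N \<and> diagonal_mat D \<and> (\<forall>i<N. D $$ (i,i) > 0)}"

definition Jmat :: "nat \<Rightarrow> nat \<Rightarrow> real mat" where
  "Jmat m n = four_block_mat (1\<^sub>m m) (0\<^sub>m m n) (0\<^sub>m n m) (- (1\<^sub>m n))"

definition gen_chol_factor :: "nat \<Rightarrow> nat \<Rightarrow> real mat \<Rightarrow> real mat \<Rightarrow> bool" where
  "gen_chol_factor m n M L \<longleftrightarrow>
     (\<exists>L11 L21 L22.
        L11 \<in> carrier_mat m m \<and> L21 \<in> carrier_mat n m \<and> L22 \<in> carrier_mat n n \<and>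
        lower_triangular_mat L11 \<and> invertible_mat L11 \<and>
        lower_triangular_mat L22 \<and> invertible_mat L22 \<and>
        L = four_block_mat L11 (0\<^sub>m m n) L21 L22) \<and>
     M = L * Jmat m n * transpose_mat L"

end

theory Submission
  imports Defs "Jordan_Normal_Form.Determinant" "HOL-Analysis.L2_Norm"
begin


lemma frob_L2: "frob_norm A = L2_set (\<lambda>p. A $$ p) ({..<dim_row A} \<times> {..<dim_col A})"
  unfolding frob_norm_def L2_set_def by (simp add: sum.cartesian_product case_prod_beta)

lemma frob_nonneg: "frob_norm A \<ge> 0" by (simp add: frob_norm_def sum_nonneg)

lemma frob_add: assumes "A \<in> carrier_mat r c" "B \<in> carrier_mat r c"
  shows "frob_norm (A + B) \<le> frob_norm A + frob_norm B"
proof -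
  have "frob_norm (A + B) = L2_set (\<lambda>p. A $$ p + B $$ p) ({..<r} \<times> {..<c})"
    unfolding frob_L2 using assms by (intro L2_set_cong) auto
  also have "\<dots> \<le> frob_norm A + frob_norm B" unfolding frob_L2 using assms
    by (simp add: L2_set_triangle_ineq)
  finally show ?thesis .
qed

lemma frob_uminus: "frob_norm (- A) = frob_norm A"
  unfolding frob_norm_def by simp

lemma frob_diff: assumes "A \<in> carrier_mat r c" "B \<in> carrier_mat r c"
  shows "frob_norm (A - B) \<le> frob_norm A + frob_norm B"
proof -
  have "A - B = A + (- B)" using assms by auto
  thus ?thesis using frob_add[OF assms(1), of "-B"] assms frob_uminus[of B] by auto
qed

lemma frob_entry: assumes "i < dim_row A" "j < dim_col A"
  shows "\<bar>A $$ (i,j)\<bar> \<le> frob_norm A"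
proof -
  have "(A $$ (i,j))\<^sup>2 \<le> (\<Sum>j<dim_col A. (A $$ (i,j))\<^sup>2)"
    using assms by (intro member_le_sum) auto
  also have "\<dots> \<le> (\<Sum>i<dim_row A. \<Sum>j<dim_col A. (A $$ (i,j))\<^sup>2)"
    using assms by (intro member_le_sum[where f="\<lambda>i. \<Sum>j<dim_col A. (A $$ (i,j))\<^sup>2"]) (auto intro: sum_nonneg)
  finally have "sqrt ((A $$ (i,j))\<^sup>2) \<le> frob_norm A" unfolding frob_norm_def by (rule real_sqrt_le_mono)
  thus ?thesis by simp
qed

lemma frob_zero: assumes "A \<in> carrier_mat r c" "frob_norm A \<le> 0" shows "A = 0\<^sub>m r c"
proof (rule eq_matI)
  fix i j assume "i < dim_row (0\<^sub>m r c)" "j < dim_col (0\<^sub>m r c)"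
  thus "A $$ (i,j) = 0\<^sub>m r c $$ (i,j)" using frob_entry[of i A j] assms by auto
qed (use assms in auto)

lemma frob_transpose: "frob_norm (transpose_mat A) = frob_norm A"
  unfolding frob_norm_def by (simp, subst sum.swap, simp)

lemma vnorm2_L2: "vnorm2 x = L2_set (\<lambda>i. x $ i) {..<dim_vec x}"
  unfolding vnorm2_def L2_set_def scalar_prod_def by (simp add: power2_eq_square atLeast0LessThan)

lemma vnorm2_nonneg: "vnorm2 x \<ge> 0" by (simp add: vnorm2_L2)

lemma vnorm2_sq: "(vnorm2 x)\<^sup>2 = (\<Sum>i<dim_vec x. (x $ i)\<^sup>2)"
  unfolding vnorm2_L2 L2_set_def by (simp add: sum_nonneg)

lemma frob_sq: "(frob_norm A)\<^sup>2 = (\<Sum>i<dim_row A. \<Sum>j<dim_col A. (A $$ (i,j))\<^sup>2)"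
  unfolding frob_norm_def by (simp add: sum_nonneg)

lemma frob_cols: "(frob_norm A)\<^sup>2 = (\<Sum>j<dim_col A. (vnorm2 (col A j))\<^sup>2)"
  unfolding frob_sq vnorm2_sq by (subst sum.swap) simp

lemma mult_vec_bound: assumes "x \<in> carrier_vec (dim_col A)"
  shows "vnorm2 (A *\<^sub>v x) \<le> frob_norm A * vnorm2 x"
proof -
  have row: "((A *\<^sub>v x) $ i)\<^sup>2 \<le> (\<Sum>j<dim_col A. (A $$ (i,j))\<^sup>2) * (vnorm2 x)\<^sup>2" if i: "i < dim_row A" for i
  proof -
    have "(A *\<^sub>v x) $ i = (\<Sum>j<dim_col A. A $$ (i,j) * x $ j)"
      using i assms by (simp add: scalar_prod_def atLeast0LessThan)
    hence "\<bar>(A *\<^sub>v x) $ i\<bar> \<le> (\<Sum>j<dim_col A. \<bar>A $$ (i,j)\<bar> * \<bar>x $ j\<bar>)"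
      by (simp add: sum_abs[THEN order_trans] abs_mult)
    also have "\<dots> \<le> L2_set (\<lambda>j. A $$ (i,j)) {..<dim_col A} * L2_set (\<lambda>j. x $ j) {..<dim_col A}"
      by (rule L2_set_mult_ineq)
    finally have "\<bar>(A *\<^sub>v x) $ i\<bar> \<le> L2_set (\<lambda>j. A $$ (i,j)) {..<dim_col A} * vnorm2 x"
      using assms by (simp add: vnorm2_L2)
    hence "\<bar>(A *\<^sub>v x) $ i\<bar>\<^sup>2 \<le> (L2_set (\<lambda>j. A $$ (i,j)) {..<dim_col A} * vnorm2 x)\<^sup>2"
      by (rule power_mono) simp
    thus ?thesis by (simp add: power_mult_distrib L2_set_def sum_nonneg)
  qed
  have "(vnorm2 (A *\<^sub>v x))\<^sup>2 = (\<Sum>i<dim_row A. ((A *\<^sub>v x) $ i)\<^sup>2)" by (simp add: vnorm2_sq)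
  also have "\<dots> \<le> (\<Sum>i<dim_row A. (\<Sum>j<dim_col A. (A $$ (i,j))\<^sup>2) * (vnorm2 x)\<^sup>2)"
    by (rule sum_mono) (rule row, simp)
  also have "\<dots> = (frob_norm A * vnorm2 x)\<^sup>2" by (simp add: frob_sq power_mult_distrib sum_distrib_right)
  finally show ?thesis
    using frob_nonneg[of A] vnorm2_nonneg[of x] by (meson mult_nonneg_nonneg power2_le_imp_le)
qed


lemma vnorm2_smult: "vnorm2 (c \<cdot>\<^sub>v x) = \<bar>c\<bar> * vnorm2 x"
proof -
  have "(vnorm2 (c \<cdot>\<^sub>v x))\<^sup>2 = (\<bar>c\<bar> * vnorm2 x)\<^sup>2"
    by (simp add: vnorm2_sq power_mult_distrib sum_distrib_left)
  thus ?thesis by (rule power2_eq_imp_eq[OF _ vnorm2_nonneg]) (simp add: vnorm2_nonneg)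
qed

lemma mult_mat_vec_smult': "x \<in> carrier_vec (dim_col A) \<Longrightarrow> A *\<^sub>v (c \<cdot>\<^sub>v x) = c \<cdot>\<^sub>v (A *\<^sub>v (x :: real vec))"
  by (intro eq_vecI) (auto simp: scalar_prod_def sum_distrib_left intro!: sum.cong)

lemma vnorm2_zero: assumes "x \<in> carrier_vec k" "vnorm2 x = 0" shows "x = 0\<^sub>v k"
proof (rule eq_vecI)
  fix i assume i: "i < dim_vec (0\<^sub>v k)"
  have "(x $ i)\<^sup>2 \<le> (\<Sum>i<dim_vec x. (x $ i)\<^sup>2)" using i assms by (intro member_le_sum) auto
  also have "\<dots> = 0" using assms vnorm2_sq[of x] by simp
  finally show "x $ i = 0\<^sub>v k $ i" using i by simp
qed (use assms in auto)

definition specset :: "real mat \<Rightarrow> real set" where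
  "specset A = {vnorm2 (A *\<^sub>v x) | x. x \<in> carrier_vec (dim_col A) \<and> vnorm2 x = 1}"

lemma spec_norm_specset: "spec_norm A = Sup (specset A)"
  unfolding spec_norm_def specset_def by simp

lemma specset_ne: assumes "dim_col A > 0" shows "specset A \<noteq> {}"
proof -
  have "vnorm2 (unit_vec (dim_col A) 0) = 1"
  proof -
    have "(vnorm2 (unit_vec (dim_col A) 0))\<^sup>2 = (\<Sum>i<dim_col A. (if i = 0 then 1 else 0))"
      unfolding vnorm2_sq by (intro sum.cong) (use assms in auto)
    also have "\<dots> = 1" using assms by simp
    finally have "(vnorm2 (unit_vec (dim_col A) 0))\<^sup>2 = 1\<^sup>2" by simp
    thus ?thesis by (rule power2_eq_imp_eq[OF _ vnorm2_nonneg]) simp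
  qed
  thus ?thesis unfolding specset_def using unit_vec_carrier by blast
qed

lemma specset_bdd: "bdd_above (specset A)"
proof (rule bdd_aboveI[of _ "frob_norm A"])
  fix v assume v_in: "v \<in> specset A"
  obtain x where x: "x \<in> carrier_vec (dim_col A)" "vnorm2 x = 1" "v = vnorm2 (A *\<^sub>v x)"
    using v_in unfolding specset_def by blast
  have "vnorm2 (A *\<^sub>v x) \<le> frob_norm A * vnorm2 x" by (rule mult_vec_bound[OF x(1)])
  thus "v \<le> frob_norm A" using x(2,3) by simp
qed

lemma spec_nonneg: assumes "dim_col A > 0" shows "spec_norm A \<ge> 0"
proof -
  obtain v where "v \<in> specset A" using specset_ne[OF assms] by auto
  moreover have "v \<ge> 0" using \<open>v \<in> specset A\<close> vnorm2_nonneg unfolding specset_def by auto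
  moreover have "v \<le> Sup (specset A)" by (rule cSup_upper[OF \<open>v \<in> specset A\<close> specset_bdd])
  ultimately show ?thesis unfolding spec_norm_specset by linarith
qed

lemma spec_le_frob: assumes "dim_col A > 0" shows "spec_norm A \<le> frob_norm A"
proof -
  have "v \<le> frob_norm A" if v_in: "v \<in> specset A" for v
  proof -
    obtain x where x: "x \<in> carrier_vec (dim_col A)" "vnorm2 x = 1" "v = vnorm2 (A *\<^sub>v x)"
      using v_in unfolding specset_def by blast
    have "vnorm2 (A *\<^sub>v x) \<le> frob_norm A * vnorm2 x" by (rule mult_vec_bound[OF x(1)])
    thus ?thesis using x(2,3) by simp
  qed
  thus ?thesis unfolding spec_norm_specset by (rule cSup_least[OF specset_ne[OF assms]])
qed

lemma spec_bound: assumes "dim_col A > 0" "x \<in> carrier_vec (dim_col A)"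
  shows "vnorm2 (A *\<^sub>v x) \<le> spec_norm A * vnorm2 x"
proof (cases "vnorm2 x = 0")
  case True
  hence "x = 0\<^sub>v (dim_col A)" using vnorm2_zero assms by auto
  hence "A *\<^sub>v x = 0\<^sub>v (dim_row A)" by (intro eq_vecI) (auto simp: scalar_prod_def)
  hence "vnorm2 (A *\<^sub>v x) = 0" by (simp add: vnorm2_def scalar_prod_def)
  thus ?thesis using True by simp
next
  case False
  let ?c = "1 / vnorm2 x"
  have pos: "vnorm2 x > 0" using False vnorm2_nonneg[of x] by auto
  have "vnorm2 (?c \<cdot>\<^sub>v x) = 1" using pos by (simp add: vnorm2_smult)
  hence "vnorm2 (A *\<^sub>v (?c \<cdot>\<^sub>v x)) \<in> specset A" unfolding specset_def using assms by auto
  hence "vnorm2 (A *\<^sub>v (?c \<cdot>\<^sub>v x)) \<le> spec_norm A"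
    unfolding spec_norm_specset using specset_bdd by (rule cSup_upper)
  hence "vnorm2 (A *\<^sub>v x) / vnorm2 x \<le> spec_norm A"
    using pos assms by (simp add: mult_mat_vec_smult' vnorm2_smult)
  thus ?thesis using pos by (simp add: divide_le_eq mult.commute)
qed

lemma frob_mult_spec: assumes X: "X \<in> carrier_mat r k" and Y: "Y \<in> carrier_mat k c" and k: "k > 0"
  shows "frob_norm (X * Y) \<le> spec_norm X * frob_norm Y"
proof -
  have dc: "dim_col (X * Y) = c" using Y by simp
  have "(frob_norm (X * Y))\<^sup>2 = (\<Sum>j<c. (vnorm2 (col (X * Y) j))\<^sup>2)"
    using frob_cols[of "X * Y"] unfolding dc .
  also have "\<dots> = (\<Sum>j<c. (vnorm2 (X *\<^sub>v col Y j))\<^sup>2)"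
    by (rule sum.cong[OF refl]) (simp add: col_mult2[OF X Y])
  also have "\<dots> \<le> (\<Sum>j<c. (spec_norm X * vnorm2 (col Y j))\<^sup>2)"
  proof (rule sum_mono)
    fix j assume j: "j \<in> {..<c}"
    have cv: "col Y j \<in> carrier_vec (dim_col X)" using X Y by (simp add: carrier_vecI)
    have "vnorm2 (X *\<^sub>v col Y j) \<le> spec_norm X * vnorm2 (col Y j)"
      by (rule spec_bound[OF _ cv]) (use X k in simp)
    thus "(vnorm2 (X *\<^sub>v col Y j))\<^sup>2 \<le> (spec_norm X * vnorm2 (col Y j))\<^sup>2"
      by (rule power_mono) (rule vnorm2_nonneg)
  qed
  also have "\<dots> = (spec_norm X)\<^sup>2 * (\<Sum>j<c. (vnorm2 (col Y j))\<^sup>2)"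
    by (simp only: power_mult_distrib sum_distrib_left)
  also have "(\<Sum>j<c. (vnorm2 (col Y j))\<^sup>2) = (frob_norm Y)\<^sup>2"
    using frob_cols[of Y] Y by simp
  also have "(spec_norm X)\<^sup>2 * (frob_norm Y)\<^sup>2 = (spec_norm X * frob_norm Y)\<^sup>2"
    by (simp only: power_mult_distrib)
  finally have sq: "(frob_norm (X * Y))\<^sup>2 \<le> (spec_norm X * frob_norm Y)\<^sup>2" .
  have "spec_norm X \<ge> 0" using spec_nonneg[of X] X k by simp
  hence "spec_norm X * frob_norm Y \<ge> 0" using frob_nonneg[of Y] by simp
  thus ?thesis by (rule power2_le_imp_le[OF sq])
qed

lemma frob_mult: assumes X: "X \<in> carrier_mat r k" and Y: "Y \<in> carrier_mat k c" and k: "k > 0"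
  shows "frob_norm (X * Y) \<le> frob_norm X * frob_norm Y"
proof -
  have "spec_norm X \<le> frob_norm X" using spec_le_frob[of X] X k by simp
  hence "spec_norm X * frob_norm Y \<le> frob_norm X * frob_norm Y"
    by (rule mult_right_mono) (rule frob_nonneg)
  thus ?thesis using frob_mult_spec[OF assms] by simp
qed



definition jd :: "nat \<Rightarrow> nat \<Rightarrow> real" where "jd m i = (if i < m then 1 else -1)"

lemma jd_sq: "jd m i * jd m i = 1" by (simp add: jd_def)

lemma J_carrier: "Jmat m n \<in> carrier_mat (m+n) (m+n)"
  unfolding Jmat_def by simp

lemma J_dims[simp]: "dim_row (Jmat m n) = m+n" "dim_col (Jmat m n) = m+n"
  unfolding Jmat_def by simp_all

lemma J_index: "i < m+n \<Longrightarrow> j < m+n \<Longrightarrow> Jmat m n $$ (i,j) = (if i = j then jd m i else 0)"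
  unfolding Jmat_def jd_def by auto

lemma mult_J_index: assumes "X \<in> carrier_mat r (m+n)" "i < r" "j < m+n"
  shows "(X * Jmat m n) $$ (i,j) = X $$ (i,j) * jd m j"
proof -
  have "(X * Jmat m n) $$ (i,j) = (\<Sum>k\<in>{0..<m+n}. X $$ (i,k) * (if k = j then jd m k else 0))"
    using assms J_carrier[of m n] by (auto simp: scalar_prod_def J_index intro!: sum.cong)
  also have "\<dots> = X $$ (i,j) * jd m j" using assms(3)
    by (simp add: if_distrib[of "\<lambda>x. _ * x"] cong: if_cong)
  finally show ?thesis .
qed

lemma J_mult_index: assumes "X \<in> carrier_mat (m+n) c" "i < m+n" "j < c"
  shows "(Jmat m n * X) $$ (i,j) = jd m i * X $$ (i,j)"
proof -
  have "(Jmat m n * X) $$ (i,j) = (\<Sum>k\<in>{0..<m+n}. (if i = k then jd m i else 0) * X $$ (k,j))"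
    using assms J_carrier[of m n] by (auto simp: scalar_prod_def J_index intro!: sum.cong)
  also have "\<dots> = jd m i * X $$ (i,j)" using assms(2)
    by (simp add: if_distrib[of "\<lambda>x. x * _"] cong: if_cong)
  finally show ?thesis .
qed

lemma J_J: "Jmat m n * Jmat m n = 1\<^sub>m (m+n)"
  by (rule eq_matI) (auto simp del: index_mult_mat simp: index_mult_mat(2,3) J_mult_index[OF J_carrier] J_index jd_sq)

lemma J_transpose: "transpose_mat (Jmat m n) = Jmat m n"
  by (rule eq_matI) (auto simp: J_index J_carrier[THEN carrier_matD(1)] J_carrier[THEN carrier_matD(2)])

lemma frob_mult_J: assumes "X \<in> carrier_mat r (m+n)"
  shows "frob_norm (X * Jmat m n) = frob_norm X"
proof -
  have "\<And>i j. i < r \<Longrightarrow> j < m+n \<Longrightarrow> ((X * Jmat m n) $$ (i,j))\<^sup>2 = (X $$ (i,j))\<^sup>2"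
    using assms by (simp del: index_mult_mat add: mult_J_index power_mult_distrib jd_def)
  thus ?thesis using assms J_carrier[of m n] unfolding frob_norm_def by simp
qed

lemma frob_J_mult: assumes "X \<in> carrier_mat (m+n) c"
  shows "frob_norm (Jmat m n * X) = frob_norm X"
proof -
  have "\<And>i j. i < m+n \<Longrightarrow> j < c \<Longrightarrow> ((Jmat m n * X) $$ (i,j))\<^sup>2 = (X $$ (i,j))\<^sup>2"
    using assms by (simp del: index_mult_mat add: J_mult_index power_mult_distrib jd_def)
  thus ?thesis using assms J_carrier[of m n] unfolding frob_norm_def by simp
qed

definition low :: "real mat \<Rightarrow> real mat" where
  "low X = mat (dim_row X) (dim_col X) (\<lambda>(i,j). if j < i then X $$ (i,j) else if i = j then X $$ (i,j) / 2 else 0)"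

lemma low_carrier: "X \<in> carrier_mat r c \<Longrightarrow> low X \<in> carrier_mat r c"
  unfolding low_def by auto

lemma low_index: "i < dim_row X \<Longrightarrow> j < dim_col X \<Longrightarrow>
  low X $$ (i,j) = (if j < i then X $$ (i,j) else if i = j then X $$ (i,j) / 2 else 0)"
  unfolding low_def by auto

lemma low_dims[simp]: "dim_row (low X) = dim_row X" "dim_col (low X) = dim_col X"
  unfolding low_def by auto

lemma low_lower: "lower_triangular_mat (low X)"
  unfolding lower_triangular_mat_def by (auto simp: low_index)

lemma low_sym: assumes "X \<in> carrier_mat N N" "transpose_mat X = X"
  shows "low X + transpose_mat (low X) = X"
proof (rule eq_matI)
  fix i j assume ij: "i < dim_row X" "j < dim_col X"
  have "X $$ (j,i) = X $$ (i,j)" using arg_cong[OF assms(2), of "\<lambda>A. A $$ (i,j)"] ij assms(1) by auto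
  thus "(low X + transpose_mat (low X)) $$ (i,j) = X $$ (i,j)" using ij assms(1) by (auto simp: low_index)
qed (use assms in auto)

lemma low_diff: assumes "A \<in> carrier_mat r c" "B \<in> carrier_mat r c"
  shows "low A - low B = low (A - B)"
  by (rule eq_matI) (use assms in \<open>auto simp: low_index diff_divide_distrib\<close>)

lemma low_entry_sq: "(if j < i then x else if i = j then x / 2 else 0)\<^sup>2 \<le> (x::real)\<^sup>2"
  by (auto simp: power_divide)

lemma frob_low: "frob_norm (low X) \<le> frob_norm X"
  unfolding frob_norm_def low_dims
  by (intro real_sqrt_le_mono sum_mono) (simp add: low_index low_entry_sq)

lemma frob_low_sym: assumes X: "X \<in> carrier_mat N N" "transpose_mat X = X"
  shows "frob_norm (low X) \<le> frob_norm X / sqrt 2"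
proof -
  define l where "l = (\<lambda>i j. (low X $$ (i,j))\<^sup>2)"
  have sym: "X $$ (j,i) = X $$ (i,j)" if "i < N" "j < N" for i j
    using arg_cong[OF X(2), of "\<lambda>A. A $$ (i,j)"] that X(1) by auto
  have pt: "l i j + l j i \<le> (X $$ (i,j))\<^sup>2" if "i < N" "j < N" for i j
    using that X(1) sym[OF that] by (auto simp: l_def low_index power_divide)
  have "2 * (frob_norm (low X))\<^sup>2 = (\<Sum>i<N. \<Sum>j<N. l i j) + (\<Sum>i<N. \<Sum>j<N. l j i)"
    unfolding frob_sq l_def using X(1) by (simp, subst (2) sum.swap, simp)
  also have "\<dots> = (\<Sum>i<N. \<Sum>j<N. l i j + l j i)" by (simp add: sum.distrib)
  also have "\<dots> \<le> (\<Sum>i<N. \<Sum>j<N. (X $$ (i,j))\<^sup>2)" by (intro sum_mono pt) auto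
  also have "\<dots> = (frob_norm X)\<^sup>2" unfolding frob_sq using X(1) by simp
  finally have "(frob_norm (low X))\<^sup>2 \<le> (frob_norm X / sqrt 2)\<^sup>2" by (simp add: power_divide)
  thus ?thesis by (rule power2_le_imp_le) (simp add: frob_nonneg)
qed

lemma diag_mult_index: assumes "D \<in> carrier_mat N N" "diagonal_mat D" "M \<in> carrier_mat N c" "i < N" "j < c"
  shows "(D * M) $$ (i,j) = D $$ (i,i) * M $$ (i,j)"
proof -
  have "(D * M) $$ (i,j) = (\<Sum>k\<in>{0..<N}. (if i = k then D $$ (i,i) else 0) * M $$ (k,j))"
    using assms by (auto simp: scalar_prod_def diagonal_mat_def intro!: sum.cong)
  also have "\<dots> = D $$ (i,i) * M $$ (i,j)" using assms(4)
    by (simp add: if_distrib[of "\<lambda>x. x * _"] cong: if_cong)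
  finally show ?thesis .
qed

lemma diag_low: assumes "D \<in> carrier_mat N N" "diagonal_mat D" "M \<in> carrier_mat N N"
  shows "D * low M = low (D * M)"
proof (rule eq_matI)
  fix i j assume ij: "i < dim_row (low (D * M))" "j < dim_col (low (D * M))"
  hence ij': "i < N" "j < N" using assms by auto
  have "(D * low M) $$ (i,j) = D $$ (i,i) * low M $$ (i,j)"
    by (rule diag_mult_index[OF assms(1,2) low_carrier[OF assms(3)] ij'])
  also have "\<dots> = low (D * M) $$ (i,j)"
    using ij' assms by (simp del: index_mult_mat add: index_mult_mat(2,3) low_index diag_mult_index[OF assms(1,2,3)])
  finally show "(D * low M) $$ (i,j) = low (D * M) $$ (i,j)" .
qed (use assms in auto)



lemma lt_mult: assumes X: "X \<in> carrier_mat N N" and Y: "Y \<in> carrier_mat N N"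
  and lX: "lower_triangular_mat X" and lY: "lower_triangular_mat Y"
  shows "lower_triangular_mat (X * Y)" "\<And>i. i < N \<Longrightarrow> (X * Y) $$ (i,i) = X $$ (i,i) * Y $$ (i,i)"
proof -
  have Xz: "X $$ (i,k) = 0" if "i < k" "k < N" "i < N" for i k
    using lX that X unfolding lower_triangular_mat_def by auto
  have Yz: "Y $$ (k,j) = 0" if "k < j" "j < N" "k < N" for k j
    using lY that Y unfolding lower_triangular_mat_def by auto
  have ent: "(X * Y) $$ (i,j) = (\<Sum>k\<in>{0..<N}. X $$ (i,k) * Y $$ (k,j))" if "i < N" "j < N" for i j
    using that X Y by (simp add: scalar_prod_def)
  show "lower_triangular_mat (X * Y)"
    unfolding lower_triangular_mat_def
  proof (intro allI impI)
    fix i j assume ij: "i < dim_row (X * Y)" "j < dim_col (X * Y)" "i < j"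
    hence ij': "i < N" "j < N" using X Y by auto
    have "(\<Sum>k\<in>{0..<N}. X $$ (i,k) * Y $$ (k,j)) = 0"
    proof (rule sum.neutral, intro ballI)
      fix k assume k: "k \<in> {0..<N}"
      show "X $$ (i,k) * Y $$ (k,j) = 0"
      proof (cases "k \<le> i")
        case True thus ?thesis using Yz[of k j] ij ij' k by auto
      next
        case False thus ?thesis using Xz[of i k] ij' k by auto
      qed
    qed
    thus "(X * Y) $$ (i,j) = 0" using ent[OF ij'] by simp
  qed
  fix i assume i: "i < N"
  have "(\<Sum>k\<in>{0..<N}. X $$ (i,k) * Y $$ (k,i)) = (\<Sum>k\<in>{0..<N}. if k = i then X $$ (i,i) * Y $$ (i,i) else 0)"
  proof (rule sum.cong[OF refl])
    fix k assume k: "k \<in> {0..<N}"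
    show "X $$ (i,k) * Y $$ (k,i) = (if k = i then X $$ (i,i) * Y $$ (i,i) else 0)"
      using Xz[of i k] Yz[of k i] i k by (cases "k < i"; cases "i < k") auto
  qed
  also have "\<dots> = X $$ (i,i) * Y $$ (i,i)" using i by simp
  finally show "(X * Y) $$ (i,i) = X $$ (i,i) * Y $$ (i,i)" using ent[OF i i] by simp
qed

lemma inverts_carrier: assumes A: "(A :: 'a :: comm_ring_1 mat) \<in> carrier_mat N N" and "inverts_mat A B" "inverts_mat B A"
  shows "B \<in> carrier_mat N N" "A * B = 1\<^sub>m N" "B * A = 1\<^sub>m N"
proof -
  have AB: "A * B = 1\<^sub>m N" using assms unfolding inverts_mat_def by auto
  have "dim_col (A * B) = dim_col (1\<^sub>m N :: 'a mat)" using AB by simp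
  hence c: "dim_col B = N" by simp
  have BA: "B * A = 1\<^sub>m (dim_row B)" using assms unfolding inverts_mat_def by auto
  have "dim_col (B * A) = dim_col (1\<^sub>m (dim_row B) :: 'a mat)" using BA by simp
  hence r: "dim_row B = N" using A by simp
  show "B \<in> carrier_mat N N" using r c by auto
  show "A * B = 1\<^sub>m N" by fact
  show "B * A = 1\<^sub>m N" using BA r by simp
qed

lemma inv_mat_props: assumes A: "A \<in> carrier_mat N N" and inv: "invertible_mat A"
  shows "inv_mat A \<in> carrier_mat N N" "A * inv_mat A = 1\<^sub>m N" "inv_mat A * A = 1\<^sub>m N"
proof -
  have "\<exists>B. inverts_mat A B \<and> inverts_mat B A" using inv unfolding invertible_mat_def by auto
  hence "inverts_mat A (inv_mat A) \<and> inverts_mat (inv_mat A) A" unfolding inv_mat_def by (rule someI_ex)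
  thus "inv_mat A \<in> carrier_mat N N" "A * inv_mat A = 1\<^sub>m N" "inv_mat A * A = 1\<^sub>m N"
    using inverts_carrier[OF A] by auto
qed

lemma inv_mat_unique: assumes A: "A \<in> carrier_mat N N" and B: "B \<in> carrier_mat N N"
  and AB: "A * B = 1\<^sub>m N" and BA: "B * A = 1\<^sub>m N"
  shows "inv_mat A = B"
proof -
  have inv: "invertible_mat A" unfolding invertible_mat_def inverts_mat_def
    using A B AB BA by (auto intro!: exI[of _ B])
  note p = inv_mat_props[OF A inv]
  have "inv_mat A = inv_mat A * (A * B)" using AB p(1) by simp
  also have "\<dots> = (inv_mat A * A) * B" using p(1) A B by (simp add: assoc_mult_mat)
  also have "\<dots> = B" using p(3) B by simp
  finally show ?thesis .
qed

lemma invertible_det: assumes A: "(A :: real mat) \<in> carrier_mat N N" and inv: "invertible_mat A"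
  shows "det A \<noteq> 0"
proof -
  note p = inv_mat_props[OF A inv]
  have "det (inv_mat A) * det A = 1" using det_mult[OF p(1) A] p(3) by simp
  thus ?thesis by auto
qed

lemma det_invertible: assumes A: "(A :: real mat) \<in> carrier_mat N N" and d: "det A \<noteq> 0"
  shows "invertible_mat A"
proof -
  have "A \<in> Units (ring_mat TYPE(real) N undefined)" by (rule det_non_zero_imp_unit[OF A d])
  then obtain B where B: "B \<in> carrier_mat N N" "B * A = 1\<^sub>m N" "A * B = 1\<^sub>m N"
    unfolding Units_def ring_mat_def by auto
  thus ?thesis unfolding invertible_mat_def inverts_mat_def using A by (auto intro!: exI[of _ B])
qed

lemma lt_det: assumes X: "X \<in> carrier_mat N N" and l: "lower_triangular_mat X"
  shows "det X = (\<Prod>i=0..<N. X $$ (i,i))"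
proof -
  have "det X = prod_list (diag_mat X)"
    by (rule det_lower_triangular[OF _ X]) (use l X in \<open>auto simp: lower_triangular_mat_def\<close>)
  thus ?thesis using X by (simp add: prod_list_diag_prod)
qed

lemma lt_invertible_iff: assumes X: "X \<in> carrier_mat N N" and l: "lower_triangular_mat X"
  shows "invertible_mat X \<longleftrightarrow> (\<forall>i<N. X $$ (i,i) \<noteq> 0)"
proof -
  have "invertible_mat X \<longleftrightarrow> det X \<noteq> 0" using invertible_det[OF X] det_invertible[OF X] by auto
  also have "\<dots> \<longleftrightarrow> (\<forall>i<N. X $$ (i,i) \<noteq> 0)" unfolding lt_det[OF X l] by auto
  finally show ?thesis .
qed

lemma gen_chol_struct: assumes "L11 \<in> carrier_mat m m" "L21 \<in> carrier_mat n m" "L22 \<in> carrier_mat n n"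
  "lower_triangular_mat L11" "invertible_mat L11" "lower_triangular_mat L22" "invertible_mat L22"
  "L = four_block_mat L11 (0\<^sub>m m n) L21 L22"
  shows "L \<in> carrier_mat (m+n) (m+n)" "lower_triangular_mat L" "\<forall>i<m+n. L $$ (i,i) \<noteq> 0"
proof -
  show Lc: "L \<in> carrier_mat (m+n) (m+n)" using assms by auto
  have d1: "\<forall>i<m. L11 $$ (i,i) \<noteq> 0" using lt_invertible_iff[OF assms(1,4)] assms(5) by auto
  have d2: "\<forall>i<n. L22 $$ (i,i) \<noteq> 0" using lt_invertible_iff[OF assms(3,6)] assms(7) by auto
  show "lower_triangular_mat L" unfolding lower_triangular_mat_def
  proof (intro allI impI)
    fix i j assume "i < dim_row L" "j < dim_col L" "i < j"
    thus "L $$ (i,j) = 0" using assms(1-4,6,8)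
      by (auto simp: lower_triangular_mat_def)
  qed
  show "\<forall>i<m+n. L $$ (i,i) \<noteq> 0"
  proof (intro allI impI)
    fix i assume i: "i < m+n"
    show "L $$ (i,i) \<noteq> 0"
    proof (cases "i < m")
      case True thus ?thesis using d1 assms(1,3,8) i by auto
    next
      case False thus ?thesis using d2[rule_format, of "i - m"] assms(1,3,8) i by auto
    qed
  qed
qed

lemma gen_chol_intro: assumes X: "X \<in> carrier_mat (m+n) (m+n)" and l: "lower_triangular_mat X"
  and d: "\<forall>i<m+n. X $$ (i,i) \<noteq> 0"
  shows "\<exists>L11 L21 L22.
        L11 \<in> carrier_mat m m \<and> L21 \<in> carrier_mat n m \<and> L22 \<in> carrier_mat n n \<and>
        lower_triangular_mat L11 \<and> invertible_mat L11 \<and>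
        lower_triangular_mat L22 \<and> invertible_mat L22 \<and>
        X = four_block_mat L11 (0\<^sub>m m n) L21 L22"
proof -
  have lz: "X $$ (i,j) = 0" if "i < j" "j < m+n" for i j using l X that unfolding lower_triangular_mat_def by auto
  define L11 where "L11 = mat m m (\<lambda>(i,j). X $$ (i,j))"
  define L21 where "L21 = mat n m (\<lambda>(i,j). X $$ (i+m,j))"
  define L22 where "L22 = mat n n (\<lambda>(i,j). X $$ (i+m,j+m))"
  have c: "L11 \<in> carrier_mat m m" "L21 \<in> carrier_mat n m" "L22 \<in> carrier_mat n n"
    unfolding L11_def L21_def L22_def by auto
  have l11: "lower_triangular_mat L11" unfolding lower_triangular_mat_def L11_def using lz by auto
  have l22: "lower_triangular_mat L22" unfolding lower_triangular_mat_def L22_def using lz by auto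
  have i11: "invertible_mat L11" using lt_invertible_iff[OF c(1) l11] d unfolding L11_def by auto
  have i22: "invertible_mat L22" using lt_invertible_iff[OF c(3) l22] d unfolding L22_def by auto
  have eq: "X = four_block_mat L11 (0\<^sub>m m n) L21 L22"
  proof (rule eq_matI)
    fix i j assume ij: "i < dim_row (four_block_mat L11 (0\<^sub>m m n) L21 L22)"
      "j < dim_col (four_block_mat L11 (0\<^sub>m m n) L21 L22)"
    hence ij': "i < m+n" "j < m+n" using c by auto
    show "X $$ (i,j) = four_block_mat L11 (0\<^sub>m m n) L21 L22 $$ (i,j)"
      using ij' c lz[of i j] unfolding L11_def L21_def L22_def by auto
  qed (use X c in auto)
  show ?thesis using c l11 l22 i11 i22 eq by blast
qed



lemma mult_index_sum: assumes "A \<in> carrier_mat r k" "B \<in> carrier_mat k c" "i < r" "j < c"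
  shows "(A * B) $$ (i,j) = (\<Sum>l<k. A $$ (i,l) * B $$ (l,j))"
  using assms by (simp add: scalar_prod_def atLeast0LessThan)

lemma XJY_index: assumes X: "X \<in> carrier_mat r (m+n)" and Y: "Y \<in> carrier_mat c (m+n)" and ij: "i < r" "j < c"
  shows "(X * Jmat m n * transpose_mat Y) $$ (i,j) = (\<Sum>k<m+n. X $$ (i,k) * jd m k * Y $$ (j,k))"
proof -
  have XJ: "X * Jmat m n \<in> carrier_mat r (m+n)" using X J_carrier[of m n] by simp
  have "(X * Jmat m n * transpose_mat Y) $$ (i,j) = (\<Sum>k<m+n. (X * Jmat m n) $$ (i,k) * transpose_mat Y $$ (k,j))"
    by (rule mult_index_sum[OF XJ _ ij]) (use Y in simp)
  also have "\<dots> = (\<Sum>k<m+n. X $$ (i,k) * jd m k * Y $$ (j,k))"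
    by (rule sum.cong[OF refl]) (use X Y ij in \<open>simp del: index_mult_mat add: mult_J_index\<close>)
  finally show ?thesis .
qed

lemma XJY_carrier: "X \<in> carrier_mat r (m+n) \<Longrightarrow> Y \<in> carrier_mat c (m+n) \<Longrightarrow> X * Jmat m n * transpose_mat Y \<in> carrier_mat r c"
  using J_carrier[of m n] by simp

lemma XJX_sym: assumes X: "X \<in> carrier_mat r (m+n)"
  shows "transpose_mat (X * Jmat m n * transpose_mat X) = X * Jmat m n * transpose_mat X"
proof (rule eq_matI)
  fix i j assume ij: "i < dim_row (X * Jmat m n * transpose_mat X)" "j < dim_col (X * Jmat m n * transpose_mat X)"
  hence ij': "i < r" "j < r" using X by auto
  show "transpose_mat (X * Jmat m n * transpose_mat X) $$ (i,j) = (X * Jmat m n * transpose_mat X) $$ (i,j)"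
    using ij' XJY_carrier[OF X X] by (simp del: index_mult_mat add: XJY_index[OF X X] mult_ac)
qed (use XJY_carrier[OF X X] in auto)

lemma XJY_frob: assumes X: "X \<in> carrier_mat r (m+n)" and Y: "Y \<in> carrier_mat c (m+n)" and N: "m + n > 0"
  shows "frob_norm (X * Jmat m n * transpose_mat Y) \<le> frob_norm X * frob_norm Y"
proof -
  have "frob_norm (X * Jmat m n * transpose_mat Y) \<le> frob_norm (X * Jmat m n) * frob_norm (transpose_mat Y)"
    by (rule frob_mult[OF _ _ N]) (use X Y J_carrier[of m n] in auto)
  thus ?thesis using frob_mult_J[OF X] frob_transpose[of Y] by simp
qed

lemma XJY_diff: assumes X: "X \<in> carrier_mat N (m+n)" and Y: "Y \<in> carrier_mat N (m+n)"
  shows "Y * Jmat m n * transpose_mat Y - X * Jmat m n * transpose_mat X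
       = (Y - X) * Jmat m n * transpose_mat Y + X * Jmat m n * transpose_mat (Y - X)"
proof (rule eq_matI)
  fix i j assume ij: "i < dim_row ((Y - X) * Jmat m n * transpose_mat Y + X * Jmat m n * transpose_mat (Y - X))"
    "j < dim_col ((Y - X) * Jmat m n * transpose_mat Y + X * Jmat m n * transpose_mat (Y - X))"
  hence ij': "i < N" "j < N" using X Y by auto
  have YX: "Y - X \<in> carrier_mat N (m+n)" using X Y by auto
  have "(Y * Jmat m n * transpose_mat Y - X * Jmat m n * transpose_mat X) $$ (i,j)
      = (\<Sum>k<m+n. Y $$ (i,k) * jd m k * Y $$ (j,k)) - (\<Sum>k<m+n. X $$ (i,k) * jd m k * X $$ (j,k))"
    using ij' XJY_carrier[OF X X] XJY_carrier[OF Y Y]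
    by (simp del: index_mult_mat add: XJY_index[OF X X] XJY_index[OF Y Y])
  also have "\<dots> = (\<Sum>k<m+n. (Y - X) $$ (i,k) * jd m k * Y $$ (j,k)) + (\<Sum>k<m+n. X $$ (i,k) * jd m k * (Y - X) $$ (j,k))"
    unfolding sum.distrib[symmetric] sum_subtractf[symmetric]
    by (rule sum.cong[OF refl]) (use X Y ij' in \<open>auto simp: algebra_simps\<close>)
  also have "\<dots> = ((Y - X) * Jmat m n * transpose_mat Y + X * Jmat m n * transpose_mat (Y - X)) $$ (i,j)"
    using ij' XJY_carrier[OF YX Y] XJY_carrier[OF X YX]
    by (simp del: index_mult_mat add: XJY_index[OF YX Y] XJY_index[OF X YX])
  finally show "(Y * Jmat m n * transpose_mat Y - X * Jmat m n * transpose_mat X) $$ (i,j) =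
    ((Y - X) * Jmat m n * transpose_mat Y + X * Jmat m n * transpose_mat (Y - X)) $$ (i,j)" .
qed (use X Y J_carrier[of m n] in auto)

lemma diff_diff_mat: "E \<in> carrier_mat r c \<Longrightarrow> P \<in> carrier_mat r c \<Longrightarrow> Q \<in> carrier_mat r c \<Longrightarrow>
  (E - Q) - (E - (P :: real mat)) = P - Q"
  by (rule eq_matI) auto

lemma neg_diff_mat: "P \<in> carrier_mat r c \<Longrightarrow> Q \<in> carrier_mat r c \<Longrightarrow>
  - (Q - P) = P - (Q :: real mat)"
  by (rule eq_matI) auto

definition phi :: "nat \<Rightarrow> nat \<Rightarrow> real mat \<Rightarrow> real mat \<Rightarrow> real mat" where
  "phi m n E X = low (E - X * Jmat m n * transpose_mat X)"

lemma phi_carrier: "E \<in> carrier_mat (m+n) (m+n) \<Longrightarrow> X \<in> carrier_mat (m+n) (m+n) \<Longrightarrow> phi m n E X \<in> carrier_mat (m+n) (m+n)"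
  unfolding phi_def using J_carrier[of m n] by (intro low_carrier) auto

lemma sym_arg: assumes E: "E \<in> carrier_mat (m+n) (m+n)" "transpose_mat E = E" and X: "X \<in> carrier_mat (m+n) (m+n)"
  shows "transpose_mat (E - X * Jmat m n * transpose_mat X) = E - X * Jmat m n * transpose_mat X"
  using transpose_minus[OF E(1) XJY_carrier[OF X X]] E XJX_sym[OF X] by simp

lemma phi_bound: assumes E: "E \<in> carrier_mat (m+n) (m+n)" "transpose_mat E = E" and X: "X \<in> carrier_mat (m+n) (m+n)"
  and N: "m + n > 0"
  shows "frob_norm (phi m n E X) \<le> (frob_norm E + (frob_norm X)\<^sup>2) / sqrt 2"
proof -
  have "frob_norm (phi m n E X) \<le> frob_norm (E - X * Jmat m n * transpose_mat X) / sqrt 2"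
    unfolding phi_def by (rule frob_low_sym[OF _ sym_arg[OF E X]]) (use E X XJY_carrier[OF X X] in auto)
  also have "frob_norm (E - X * Jmat m n * transpose_mat X) \<le> frob_norm E + frob_norm X * frob_norm X"
    using frob_diff[OF E(1) XJY_carrier[OF X X]] XJY_frob[OF X X N] by linarith
  hence "frob_norm (E - X * Jmat m n * transpose_mat X) / sqrt 2 \<le> (frob_norm E + (frob_norm X)\<^sup>2) / sqrt 2"
    by (simp add: divide_right_mono power2_eq_square)
  finally show ?thesis .
qed

lemma phi_contr: assumes E: "E \<in> carrier_mat (m+n) (m+n)" "transpose_mat E = E"
  and X: "X \<in> carrier_mat (m+n) (m+n)" and Y: "Y \<in> carrier_mat (m+n) (m+n)"
  and N: "m + n > 0"
  shows "frob_norm (phi m n E Y - phi m n E X) \<le> (frob_norm X + frob_norm Y) * frob_norm (Y - X) / sqrt 2"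
proof -
  let ?J = "Jmat m n"
  have c1: "E - Y * ?J * transpose_mat Y \<in> carrier_mat (m+n) (m+n)" using XJY_carrier[OF Y Y] by (rule minus_carrier_mat)
  have c2: "E - X * ?J * transpose_mat X \<in> carrier_mat (m+n) (m+n)" using XJY_carrier[OF X X] by (rule minus_carrier_mat)
  have YX: "Y - X \<in> carrier_mat (m+n) (m+n)" using X Y by auto
  have eq: "(E - Y * ?J * transpose_mat Y) - (E - X * ?J * transpose_mat X)
      = X * ?J * transpose_mat X - Y * ?J * transpose_mat Y"
    by (rule diff_diff_mat[OF E(1) XJY_carrier[OF X X] XJY_carrier[OF Y Y]])
  have "phi m n E Y - phi m n E X = low (X * ?J * transpose_mat X - Y * ?J * transpose_mat Y)"
    unfolding phi_def low_diff[OF c1 c2] eq ..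
  hence "frob_norm (phi m n E Y - phi m n E X) \<le> frob_norm (X * ?J * transpose_mat X - Y * ?J * transpose_mat Y) / sqrt 2"
    using frob_low_sym[of "X * ?J * transpose_mat X - Y * ?J * transpose_mat Y" "m+n"]
      transpose_minus[OF XJY_carrier[OF X X] XJY_carrier[OF Y Y]] XJX_sym[OF X] XJX_sym[OF Y]
      XJY_carrier[OF X X] XJY_carrier[OF Y Y] minus_carrier_mat[OF XJY_carrier[OF Y Y], of "X * ?J * transpose_mat X"] by auto
  also have "frob_norm (Y * ?J * transpose_mat Y - X * ?J * transpose_mat X) \<le> (frob_norm X + frob_norm Y) * frob_norm (Y - X)"
  proof -
    have "frob_norm (Y * ?J * transpose_mat Y - X * ?J * transpose_mat X)
        \<le> frob_norm ((Y - X) * ?J * transpose_mat Y) + frob_norm (X * ?J * transpose_mat (Y - X))"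
      unfolding XJY_diff[OF X Y] by (rule frob_add) (use XJY_carrier[OF YX Y] XJY_carrier[OF X YX] in auto)
    also have "\<dots> \<le> frob_norm (Y - X) * frob_norm Y + frob_norm X * frob_norm (Y - X)"
      using XJY_frob[OF YX Y N] XJY_frob[OF X YX N] by linarith
    finally show ?thesis by (simp add: algebra_simps)
  qed
  hence "frob_norm (X * ?J * transpose_mat X - Y * ?J * transpose_mat Y) / sqrt 2 \<le> (frob_norm X + frob_norm Y) * frob_norm (Y - X) / sqrt 2"
  proof -
    have "frob_norm (X * ?J * transpose_mat X - Y * ?J * transpose_mat Y) = frob_norm (Y * ?J * transpose_mat Y - X * ?J * transpose_mat X)"
      using frob_uminus[of "Y * ?J * transpose_mat Y - X * ?J * transpose_mat X"]
        neg_diff_mat[OF XJY_carrier[OF X X] XJY_carrier[OF Y Y]] by simp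
    thus ?thesis using \<open>frob_norm (Y * ?J * transpose_mat Y - X * ?J * transpose_mat X) \<le> _\<close>
      by (simp add: divide_right_mono)
  qed
  finally show ?thesis .
qed



lemma phi_index: assumes E: "E \<in> carrier_mat (m+n) (m+n)" and X: "X \<in> carrier_mat (m+n) (m+n)"
  and ij: "i < m+n" "j < m+n"
  shows "phi m n E X $$ (i,j) = (let h = E $$ (i,j) - (\<Sum>k<m+n. X $$ (i,k) * jd m k * X $$ (j,k)) in
      if j < i then h else if i = j then h / 2 else 0)"
proof -
  have c: "E - X * Jmat m n * transpose_mat X \<in> carrier_mat (m+n) (m+n)"
    using XJY_carrier[OF X X] by (rule minus_carrier_mat)
  have h1: "(E - X * Jmat m n * transpose_mat X) $$ (i,j) = E $$ (i,j) - (\<Sum>k<m+n. X $$ (i,k) * jd m k * X $$ (j,k))"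
    using E ij XJY_carrier[OF X X] by (simp del: index_mult_mat add: XJY_index[OF X X])
  have h2: "low (E - X * Jmat m n * transpose_mat X) $$ (i,j) = (if j < i then (E - X * Jmat m n * transpose_mat X) $$ (i,j)
     else if i = j then (E - X * Jmat m n * transpose_mat X) $$ (i,j) / 2 else 0)"
    by (rule low_index) (use c ij in auto)
  show ?thesis unfolding phi_def Let_def h2 h1 by simp
qed

lemma g_facts: assumes t: "0 \<le> t" "t < 1/2"
  defines "g \<equiv> (1 - sqrt (1 - 2*t)) / sqrt 2"
  shows "0 \<le> g" "sqrt 2 * g < 1" "(t + g\<^sup>2) / sqrt 2 = g" "g < 1"
proof -
  define r where "r = sqrt (1 - 2*t)"
  have r0: "0 < r" using t unfolding r_def by simp
  have r1: "r \<le> 1" using t unfolding r_def by simp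
  have r2: "r\<^sup>2 = 1 - 2*t" using t unfolding r_def by simp
  have s2: "sqrt 2 * sqrt 2 = (2::real)" by simp
  have gs: "sqrt 2 * g = 1 - r" unfolding g_def r_def by simp
  show "0 \<le> g" unfolding g_def using r1 unfolding r_def by simp
  show "sqrt 2 * g < 1" using gs r0 by simp
  have "2 * g\<^sup>2 = (1 - r)\<^sup>2" using gs s2 by (metis power2_eq_square power_mult_distrib mult.assoc mult.commute)
  hence "t + g\<^sup>2 = sqrt 2 * g" using gs r2 by (simp add: power2_eq_square algebra_simps)
  thus "(t + g\<^sup>2) / sqrt 2 = g" by simp
  have "sqrt 2 > (1::real)" by simp
  thus "g < 1" using \<open>sqrt 2 * g < 1\<close> \<open>0 \<le> g\<close>
    by (smt (verit) mult_le_cancel_right1)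
qed


lemma frob_tendsto: assumes X: "\<And>k. X k \<in> carrier_mat r c" and Y: "Y \<in> carrier_mat r c"
  and lim: "\<And>i j. i < r \<Longrightarrow> j < c \<Longrightarrow> (\<lambda>k. X k $$ (i,j)) \<longlonglongrightarrow> Y $$ (i,j)"
  shows "(\<lambda>k. frob_norm (X k)) \<longlonglongrightarrow> frob_norm Y"
proof -
  have eq: "frob_norm (X k) = sqrt (\<Sum>i<r. \<Sum>j<c. (X k $$ (i,j))\<^sup>2)" for k
    using X[of k] unfolding frob_norm_def by simp
  have eqY: "frob_norm Y = sqrt (\<Sum>i<r. \<Sum>j<c. (Y $$ (i,j))\<^sup>2)"
    using Y unfolding frob_norm_def by simp
  show ?thesis unfolding eq eqY
    by (intro tendsto_intros lim) auto
qed

lemma fixpoint: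
  fixes E :: "real mat" and t :: real
  assumes E: "E \<in> carrier_mat (m+n) (m+n)" "transpose_mat E = E"
  and N: "m + n > 0" and t: "frob_norm E \<le> t" "t < 1/2"
  shows "\<exists>F. F \<in> carrier_mat (m+n) (m+n) \<and> phi m n E F = F \<and> frob_norm F \<le> (1 - sqrt (1 - 2*t)) / sqrt 2"
proof -
  define g where "g = (1 - sqrt (1 - 2*t)) / sqrt 2"
  have t0: "0 \<le> t" using t frob_nonneg[of E] by linarith
  note gf = g_facts[OF t0 t(2), folded g_def]
  define c where "c = sqrt 2 * g"
  have c0: "0 \<le> c" "c < 1" using gf unfolding c_def by auto
  define Fs where "Fs = (\<lambda>k. (phi m n E ^^ k) (0\<^sub>m (m+n) (m+n)))"
  have Fs_Suc: "Fs (Suc k) = phi m n E (Fs k)" for k unfolding Fs_def by simp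
  have inv: "Fs k \<in> carrier_mat (m+n) (m+n) \<and> frob_norm (Fs k) \<le> g" for k
  proof (induction k)
    case 0
    have "frob_norm (0\<^sub>m (m+n) (m+n) :: real mat) = 0" unfolding frob_norm_def by simp
    thus ?case unfolding Fs_def using gf by simp
  next
    case (Suc k)
    hence c: "Fs k \<in> carrier_mat (m+n) (m+n)" and b: "frob_norm (Fs k) \<le> g" by auto
    have "frob_norm (Fs (Suc k)) \<le> (frob_norm E + (frob_norm (Fs k))\<^sup>2) / sqrt 2"
      unfolding Fs_Suc by (rule phi_bound[OF E c N])
    also have "\<dots> \<le> (t + g\<^sup>2) / sqrt 2"
      using t(1) power_mono[OF b frob_nonneg, of 2] by (intro divide_right_mono add_mono) auto
    also have "\<dots> = g" by (rule gf(3))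
    finally show ?case using phi_carrier[OF E(1) c] Fs_Suc by simp
  qed
  hence Fc: "\<And>k. Fs k \<in> carrier_mat (m+n) (m+n)" and Fb: "\<And>k. frob_norm (Fs k) \<le> g" by auto
  define b where "b = frob_norm (Fs 1 - Fs 0)"
  have contr: "frob_norm (Fs (Suc k) - Fs k) \<le> c ^ k * b" for k
  proof (induction k)
    case 0 thus ?case unfolding b_def by simp
  next
    case (Suc k)
    have "frob_norm (Fs (Suc (Suc k)) - Fs (Suc k)) \<le> (frob_norm (Fs k) + frob_norm (Fs (Suc k))) * frob_norm (Fs (Suc k) - Fs k) / sqrt 2"
      unfolding Fs_Suc[of "Suc k"] Fs_Suc[of k] using phi_contr[OF E Fc[of k] Fc[of "Suc k"] N] by (simp add: Fs_Suc)
    also have "\<dots> \<le> (g + g) * frob_norm (Fs (Suc k) - Fs k) / sqrt 2"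
      using Fb[of k] Fb[of "Suc k"] frob_nonneg[of "Fs (Suc k) - Fs k"]
      by (intro divide_right_mono mult_right_mono) auto
    also have "\<dots> = c * frob_norm (Fs (Suc k) - Fs k)"
      unfolding c_def by (simp add: field_simps real_sqrt_mult[symmetric])
    also have "\<dots> \<le> c * (c ^ k * b)" using Suc c0 by (intro mult_left_mono) auto
    finally show ?case by simp
  qed
  have conv: "(\<lambda>k. Fs k $$ (i,j)) \<longlonglongrightarrow> lim (\<lambda>k. Fs k $$ (i,j))" if ij: "i < m+n" "j < m+n" for i j
  proof -
    define a where "a = (\<lambda>k. Fs k $$ (i,j))"
    have d: "\<bar>a (Suc k) - a k\<bar> \<le> c ^ k * b" for k
    proof -
      have "a (Suc k) - a k = (Fs (Suc k) - Fs k) $$ (i,j)" unfolding a_def using Fc[of k] Fc[of "Suc k"] ij by simp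
      also have "\<bar>\<dots>\<bar> \<le> frob_norm (Fs (Suc k) - Fs k)" by (rule frob_entry) (use Fc[of k] ij in auto)
      finally show ?thesis using contr[of k] by simp
    qed
    have "summable (\<lambda>k. c ^ k * b)" using c0 by (intro summable_mult2 summable_geometric) auto
    hence "summable (\<lambda>k. a (Suc k) - a k)"
      by (rule summable_comparison_test[rotated]) (use d in auto)
    hence "(\<lambda>n. \<Sum>k<n. a (Suc k) - a k) \<longlonglongrightarrow> (\<Sum>k. a (Suc k) - a k)" by (rule summable_LIMSEQ)
    hence "(\<lambda>n. a n - a 0) \<longlonglongrightarrow> (\<Sum>k. a (Suc k) - a k)" by (simp add: sum_lessThan_telescope)
    hence "(\<lambda>n. a n - a 0 + a 0) \<longlonglongrightarrow> (\<Sum>k. a (Suc k) - a k) + a 0" by (intro tendsto_intros)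
    hence "convergent a" unfolding convergent_def by auto
    thus ?thesis unfolding a_def convergent_LIMSEQ_iff .
  qed
  define F where "F = mat (m+n) (m+n) (\<lambda>(i,j). lim (\<lambda>k. Fs k $$ (i,j)))"
  have FC: "F \<in> carrier_mat (m+n) (m+n)" unfolding F_def by simp
  have lim: "(\<lambda>k. Fs k $$ (i,j)) \<longlonglongrightarrow> F $$ (i,j)" if "i < m+n" "j < m+n" for i j
    using conv[OF that] that unfolding F_def by simp
  have "(\<lambda>k. frob_norm (Fs k)) \<longlonglongrightarrow> frob_norm F" by (rule frob_tendsto[OF Fc FC lim])
  hence Fg: "frob_norm F \<le> g" using Fb by (intro LIMSEQ_le_const2) auto
  have fixF: "phi m n E F = F"
  proof (rule eq_matI)
    fix i j assume ij: "i < dim_row F" "j < dim_col F"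
    hence ij': "i < m+n" "j < m+n" using FC by auto
    have "(\<lambda>k. phi m n E (Fs k) $$ (i,j)) \<longlonglongrightarrow> phi m n E F $$ (i,j)"
    proof -
      have hl: "(\<lambda>k. E $$ (i,j) - (\<Sum>l<m+n. Fs k $$ (i,l) * jd m l * Fs k $$ (j,l)))
         \<longlonglongrightarrow> E $$ (i,j) - (\<Sum>l<m+n. F $$ (i,l) * jd m l * F $$ (j,l))"
        by (intro tendsto_intros lim ij') auto
      show ?thesis
        unfolding phi_index[OF E(1) Fc ij'] phi_index[OF E(1) FC ij'] Let_def
        by (cases "j < i"; cases "i = j") (use hl in \<open>auto intro: tendsto_divide\<close>)
    qed
    moreover have "(\<lambda>k. phi m n E (Fs k) $$ (i,j)) \<longlonglongrightarrow> F $$ (i,j)"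
      unfolding Fs_Suc[symmetric] using lim[OF ij'] by (rule LIMSEQ_Suc)
    ultimately show "phi m n E F $$ (i,j) = F $$ (i,j)" by (rule LIMSEQ_unique)
  qed (use phi_carrier[OF E(1) FC] FC in auto)
  show ?thesis using FC fixF Fg unfolding g_def by blast
qed



lemma factor_eq:
  assumes E: "E \<in> carrier_mat (m+n) (m+n)" "transpose_mat E = E"
  and F: "F \<in> carrier_mat (m+n) (m+n)" and fx: "phi m n E F = F"
  shows "(1\<^sub>m (m+n) + F * Jmat m n) * Jmat m n * transpose_mat (1\<^sub>m (m+n) + F * Jmat m n) = Jmat m n + E"
proof -
  let ?J = "Jmat m n" and ?N = "m + n"
  define P where "P = 1\<^sub>m ?N + F * ?J"
  have Jc: "?J \<in> carrier_mat ?N ?N" by (rule J_carrier)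
  have FJ: "F * ?J \<in> carrier_mat ?N ?N" using F Jc by simp
  have Pc: "P \<in> carrier_mat ?N ?N" unfolding P_def using FJ by simp
  have FT: "transpose_mat F \<in> carrier_mat ?N ?N" using F by simp
  have JFT: "?J * transpose_mat F \<in> carrier_mat ?N ?N" using F Jc by simp
  have JF: "?J + F \<in> carrier_mat ?N ?N" using F by simp
  have PJ: "P * ?J = ?J + F"
  proof (rule eq_matI)
    fix i j assume ij: "i < dim_row (?J + F)" "j < dim_col (?J + F)"
    hence ij': "i < ?N" "j < ?N" using F by auto
    have "(P * ?J) $$ (i,j) = P $$ (i,j) * jd m j" by (rule mult_J_index[OF Pc ij'])
    also have "P $$ (i,j) = (if i = j then 1 else 0) + F $$ (i,j) * jd m j"
      unfolding P_def using ij' FJ F by (simp del: index_mult_mat add: mult_J_index[OF F])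
    finally show "(P * ?J) $$ (i,j) = (?J + F) $$ (i,j)"
      using ij' F by (simp add: J_index algebra_simps jd_sq mult.assoc)
  qed (use Pc Jc F in auto)
  have PT: "transpose_mat P = 1\<^sub>m ?N + ?J * transpose_mat F"
    unfolding P_def using transpose_add[OF one_carrier_mat FJ] transpose_mult[OF F Jc] J_transpose[of m n] by simp
  have "P * ?J * transpose_mat P = (?J + F) * (1\<^sub>m ?N + ?J * transpose_mat F)" unfolding PJ PT ..
  also have "\<dots> = (?J + F) * 1\<^sub>m ?N + (?J + F) * (?J * transpose_mat F)"
    by (rule mult_add_distrib_mat[OF JF one_carrier_mat JFT])
  also have "(?J + F) * 1\<^sub>m ?N = ?J + F" using Jc F by simp
  also have "(?J + F) * (?J * transpose_mat F) = ?J * (?J * transpose_mat F) + F * (?J * transpose_mat F)"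
    by (rule add_mult_distrib_mat[OF Jc F JFT])
  also have "?J * (?J * transpose_mat F) = transpose_mat F"
    using assoc_mult_mat[OF Jc Jc FT, symmetric] J_J[of m n] FT by simp
  also have "F * (?J * transpose_mat F) = F * ?J * transpose_mat F"
    using assoc_mult_mat[OF F Jc FT] by simp
  finally have eq1: "P * ?J * transpose_mat P = ?J + F + (transpose_mat F + F * ?J * transpose_mat F)" .
  define M where "M = E - F * ?J * transpose_mat F"
  have Mc: "M \<in> carrier_mat ?N ?N" unfolding M_def using XJY_carrier[OF F F] by (rule minus_carrier_mat)
  have FM: "F = low M" using fx unfolding phi_def M_def by simp
  have hs: "F + transpose_mat F = M" unfolding FM by (rule low_sym[OF Mc]) (unfold M_def, rule sym_arg[OF E F])
  show ?thesis unfolding P_def[symmetric] eq1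
  proof (rule eq_matI)
    fix i j assume ij: "i < dim_row (?J + E)" "j < dim_col (?J + E)"
    hence ij': "i < ?N" "j < ?N" using E by auto
    have h: "F $$ (i,j) + F $$ (j,i) = E $$ (i,j) - (F * ?J * transpose_mat F) $$ (i,j)"
      using arg_cong[OF hs, of "\<lambda>A. A $$ (i,j)"] ij' F E XJY_carrier[OF F F]
      unfolding M_def by (simp del: index_mult_mat)
    show "(?J + F + (transpose_mat F + F * ?J * transpose_mat F)) $$ (i,j) = (?J + E) $$ (i,j)"
      using ij' F E XJY_carrier[OF F F] h by (simp del: index_mult_mat)
  qed (use Jc F E XJY_carrier[OF F F] in auto)
qed



lemma diag_inv: assumes D: "D \<in> pos_diag_mats N"
  shows "inv_mat D \<in> carrier_mat N N" "D * inv_mat D = 1\<^sub>m N" "inv_mat D * D = 1\<^sub>m N"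
proof -
  have Dc: "D \<in> carrier_mat N N" and Dd: "diagonal_mat D" and Dp: "\<And>i. i < N \<Longrightarrow> D $$ (i,i) > 0"
    using D unfolding pos_diag_mats_def by auto
  define Di where "Di = mat N N (\<lambda>(i,j). if i = j then 1 / D $$ (i,i) else 0)"
  have Dic: "Di \<in> carrier_mat N N" unfolding Di_def by simp
  have Did: "diagonal_mat Di" unfolding Di_def diagonal_mat_def by simp
  have D0: "D $$ (i,j) = 0" if "i < N" "j < N" "i \<noteq> j" for i j using Dd Dc that unfolding diagonal_mat_def by auto
  have 1: "D * Di = 1\<^sub>m N"
  proof (rule eq_matI)
    fix i j assume "i < dim_row (1\<^sub>m N :: real mat)" "j < dim_col (1\<^sub>m N :: real mat)"
    hence ij: "i < N" "j < N" by auto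
    show "(D * Di) $$ (i,j) = 1\<^sub>m N $$ (i,j)"
      using diag_mult_index[OF Dc Dd Dic ij] ij Dp[of i] unfolding Di_def by (cases "i = j") (simp_all del: index_mult_mat)
  qed (use Dc Dic in auto)
  have 2: "Di * D = 1\<^sub>m N"
  proof (rule eq_matI)
    fix i j assume "i < dim_row (1\<^sub>m N :: real mat)" "j < dim_col (1\<^sub>m N :: real mat)"
    hence ij: "i < N" "j < N" by auto
    show "(Di * D) $$ (i,j) = 1\<^sub>m N $$ (i,j)"
      using diag_mult_index[OF Dic Did Dc ij] ij Dp[of i] D0[of i j] unfolding Di_def by (cases "i = j") (simp_all del: index_mult_mat)
  qed (use Dc Dic in auto)
  have "inv_mat D = Di" by (rule inv_mat_unique[OF Dc Dic 1 2])
  thus "inv_mat D \<in> carrier_mat N N" "D * inv_mat D = 1\<^sub>m N" "inv_mat D * D = 1\<^sub>m N" using Dic 1 2 by auto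
qed

lemma one_pos_diag: "1\<^sub>m N \<in> pos_diag_mats N"
  unfolding pos_diag_mats_def diagonal_mat_def by auto


lemma sym_E: assumes Li: "Li \<in> carrier_mat N N" and dK: "dK \<in> carrier_mat N N" "transpose_mat dK = (dK :: real mat)"
  shows "transpose_mat (Li * dK * transpose_mat Li) = Li * dK * transpose_mat Li"
proof -
  have "transpose_mat (Li * dK * transpose_mat Li) = transpose_mat (transpose_mat Li) * transpose_mat (Li * dK)"
    by (rule transpose_mult) (use Li dK in auto)
  also have "transpose_mat (Li * dK) = transpose_mat dK * transpose_mat Li"
    by (rule transpose_mult) (use Li dK in auto)
  finally show ?thesis using Li dK by simp
qed

lemma sqassoc: "A \<in> carrier_mat N N \<Longrightarrow> B \<in> carrier_mat N N \<Longrightarrow> C \<in> carrier_mat N N \<Longrightarrow> A * B * C = A * (B * C)"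
  by (rule assoc_mult_mat)

lemma sqcarrier: "A \<in> carrier_mat N N \<Longrightarrow> B \<in> carrier_mat N N \<Longrightarrow> A * B \<in> carrier_mat N N"
  by simp

lemma main_struct:
  fixes m n :: nat and K L \<Delta>K :: "real mat"
  assumes N: "m + n > 0"
    and Lc: "L \<in> carrier_mat (m+n) (m+n)" and Llow: "lower_triangular_mat L" and Ldiag: "\<forall>i<m+n. L $$ (i,i) \<noteq> 0"
    and KL: "K = L * Jmat m n * transpose_mat L"
    and dKc: "\<Delta>K \<in> carrier_mat (m + n) (m + n)" and dKs: "transpose_mat \<Delta>K = \<Delta>K"
    and Li: "Li \<in> carrier_mat (m+n) (m+n)" "L * Li = 1\<^sub>m (m+n)" "Li * L = 1\<^sub>m (m+n)"
    and Edef: "E = Li * \<Delta>K * transpose_mat Li"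
    and F: "F \<in> carrier_mat (m+n) (m+n)" and fx: "phi m n E F = F" and Fb: "frob_norm F < 1"
  shows "gen_chol_factor m n (K + \<Delta>K) (L + L * (F * Jmat m n))"
proof -
  let ?J = "Jmat m n" and ?N = "m + n"
  have Jc: "?J \<in> carrier_mat ?N ?N" by (rule J_carrier)
  have FJ: "F * ?J \<in> carrier_mat ?N ?N" using F Jc by simp
  define P where "P = 1\<^sub>m ?N + F * ?J"
  have Pc: "P \<in> carrier_mat ?N ?N" unfolding P_def using FJ by simp
  have LP: "L + L * (F * ?J) = L * P"
    unfolding P_def mult_add_distrib_mat[OF Lc one_carrier_mat FJ] using Lc by simp
  have Pidx: "P $$ (i,j) = (if i = j then 1 else 0) + F $$ (i,j) * jd m j" if "i < ?N" "j < ?N" for i j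
    unfolding P_def using that FJ F by (simp del: index_mult_mat add: mult_J_index[OF F])
  have Flow: "lower_triangular_mat F" using fx low_lower unfolding phi_def by metis
  have Plow: "lower_triangular_mat P" unfolding lower_triangular_mat_def
  proof (intro allI impI)
    fix i j assume ij: "i < dim_row P" "j < dim_col P" "i < j"
    hence "F $$ (i,j) = 0" using Flow F Pc unfolding lower_triangular_mat_def by auto
    thus "P $$ (i,j) = 0" using Pidx[of i j] ij Pc by auto
  qed
  have Pdiag: "P $$ (i,i) \<noteq> 0" if i: "i < ?N" for i
  proof
    assume "P $$ (i,i) = 0"
    hence "F $$ (i,i) * jd m i = -1" using Pidx[OF i i] by simp
    hence "\<bar>F $$ (i,i)\<bar> = 1" by (auto simp: jd_def split: if_splits)
    moreover have "\<bar>F $$ (i,i)\<bar> \<le> frob_norm F" by (rule frob_entry) (use F i in auto)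
    ultimately show False using Fb by simp
  qed
  have LPc: "L * P \<in> carrier_mat ?N ?N" using Lc Pc by simp
  note lm = lt_mult[OF Lc Pc Llow Plow]
  have LPd: "\<forall>i<?N. (L * P) $$ (i,i) \<noteq> 0" using lm(2) Ldiag Pdiag by simp
  have Peq: "P * ?J * transpose_mat P = ?J + E"
    unfolding P_def
    by (rule factor_eq[OF _ _ F fx]) (use Edef Li dKc sym_E[OF Li(1) dKc dKs] in \<open>auto\<close>)
  have Ec: "E \<in> carrier_mat ?N ?N" using Edef Li dKc by simp
  have LPT: "transpose_mat (L * P) = transpose_mat P * transpose_mat L" by (rule transpose_mult[OF Lc Pc])
  have "(L * P) * ?J * transpose_mat (L * P) = L * (P * ?J * transpose_mat P) * transpose_mat L"
  proof -
    have PTc: "transpose_mat P \<in> carrier_mat ?N ?N" and LTc: "transpose_mat L \<in> carrier_mat ?N ?N"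
      using Pc Lc by auto
    have "L * P * ?J * (transpose_mat P * transpose_mat L) = L * (P * ?J) * (transpose_mat P * transpose_mat L)"
      using assoc_mult_mat[OF Lc Pc Jc] by simp
    also have "\<dots> = L * ((P * ?J) * (transpose_mat P * transpose_mat L))"
      by (rule assoc_mult_mat) (use Lc Pc Jc PTc LTc in auto)
    also have "(P * ?J) * (transpose_mat P * transpose_mat L) = (P * ?J * transpose_mat P) * transpose_mat L"
      by (rule assoc_mult_mat[symmetric]) (use Lc Pc Jc PTc LTc in auto)
    also have "L * ((P * ?J * transpose_mat P) * transpose_mat L) = L * (P * ?J * transpose_mat P) * transpose_mat L"
      by (rule assoc_mult_mat[symmetric]) (use Lc Pc Jc PTc LTc in auto)
    finally show ?thesis unfolding LPT .
  qed
  also have "\<dots> = L * (?J + E) * transpose_mat L" unfolding Peq ..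
  also have "\<dots> = L * ?J * transpose_mat L + L * E * transpose_mat L"
    unfolding mult_add_distrib_mat[OF Lc Jc Ec] by (rule add_mult_distrib_mat) (use Lc Jc Ec in auto)
  also have "L * E * transpose_mat L = (L * Li) * \<Delta>K * (transpose_mat Li * transpose_mat L)"
  proof -
    have LiTc: "transpose_mat Li \<in> carrier_mat ?N ?N" and LTc: "transpose_mat L \<in> carrier_mat ?N ?N"
      using Li(1) Lc by auto
    show ?thesis unfolding Edef using Lc Li(1) dKc LiTc LTc
      by (simp del: transpose_carrier_mat assoc_mult_mat mult_carrier_mat add: sqassoc sqcarrier)
  qed
  also have "transpose_mat Li * transpose_mat L = 1\<^sub>m ?N"
    using transpose_mult[OF Lc Li(1)] Li(2) by simp
  finally have eqK: "(L * P) * ?J * transpose_mat (L * P) = K + \<Delta>K"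
    unfolding KL Li(2) using dKc by simp
  show ?thesis unfolding gen_chol_factor_def LP
    using gen_chol_intro[OF LPc lm(1) LPd] eqK by simp
qed


lemma frob_tr_bound: assumes Y: "Y \<in> carrier_mat r k" and X: "X \<in> carrier_mat c k" and k: "k > 0"
  shows "frob_norm (Y * transpose_mat X) \<le> spec_norm X * frob_norm Y"
proof -
  have "frob_norm (Y * transpose_mat X) = frob_norm (transpose_mat (Y * transpose_mat X))" by (simp add: frob_transpose)
  also have "transpose_mat (Y * transpose_mat X) = X * transpose_mat Y"
    using transpose_mult[OF Y, of "transpose_mat X" c] X by simp
  also have "frob_norm (X * transpose_mat Y) \<le> spec_norm X * frob_norm (transpose_mat Y)"
    by (rule frob_mult_spec[OF X _ k]) (use Y in simp)
  finally show ?thesis by (simp add: frob_transpose)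
qed

lemma main_bound:
  fixes m n :: nat and L \<Delta>K :: "real mat"
  assumes N: "m + n > 0"
    and Lc: "L \<in> carrier_mat (m+n) (m+n)"
    and dKc: "\<Delta>K \<in> carrier_mat (m + n) (m + n)"
    and Li: "Li \<in> carrier_mat (m+n) (m+n)" "L * Li = 1\<^sub>m (m+n)" "Li * L = 1\<^sub>m (m+n)"
    and Edef: "E = Li * \<Delta>K * transpose_mat Li"
    and F: "F \<in> carrier_mat (m+n) (m+n)" and fx: "phi m n E F = F" and Fb: "frob_norm F \<le> g" and g1: "g < 1"
    and D: "D \<in> pos_diag_mats (m+n)"
  shows "frob_norm (L * (F * Jmat m n)) \<le> kappa2 (L * inv_mat D) * (spec_norm Li * frob_norm \<Delta>K / (1 - g))"
proof -
  let ?J = "Jmat m n" and ?N = "m + n"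
  have Jc: "?J \<in> carrier_mat ?N ?N" by (rule J_carrier)
  have Dc: "D \<in> carrier_mat ?N ?N" and Dd: "diagonal_mat D" using D unfolding pos_diag_mats_def by auto
  note Dp = diag_inv[OF D]
  define Di where "Di = inv_mat D"
  have Dic: "Di \<in> carrier_mat ?N ?N" and DDi: "D * Di = 1\<^sub>m ?N" and DiD: "Di * D = 1\<^sub>m ?N"
    using Dp unfolding Di_def by auto
  note sq = sqassoc sqcarrier
  have inv1: "inv_mat (L * Di) = D * Li"
  proof (rule inv_mat_unique)
    show "L * Di \<in> carrier_mat ?N ?N" "D * Li \<in> carrier_mat ?N ?N" using Lc Dic Dc Li by auto
    have "L * Di * (D * Li) = L * ((Di * D) * Li)" using Lc Dic Dc Li(1)
      by (simp del: assoc_mult_mat mult_carrier_mat add: sq)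
    thus "L * Di * (D * Li) = 1\<^sub>m ?N" using DiD Li Lc by simp
    have "D * Li * (L * Di) = D * ((Li * L) * Di)" using Lc Dic Dc Li(1)
      by (simp del: assoc_mult_mat mult_carrier_mat add: sq)
    thus "D * Li * (L * Di) = 1\<^sub>m ?N" using DDi Li Dc Dic by simp
  qed
  have kap: "kappa2 (L * Di) = spec_norm (L * Di) * spec_norm (D * Li)" unfolding kappa2_def inv1 ..
  define s where "s = spec_norm Li"
  define \<epsilon> where "\<epsilon> = frob_norm \<Delta>K"
  have s0: "s \<ge> 0" unfolding s_def using spec_nonneg[of Li] Li N by simp
  have e0: "\<epsilon> \<ge> 0" unfolding \<epsilon>_def by (rule frob_nonneg)
  have sLD: "spec_norm (L * Di) \<ge> 0" using spec_nonneg[of "L * Di"] Lc Dic N by simp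
  have sDL: "spec_norm (D * Li) \<ge> 0" using spec_nonneg[of "D * Li"] Li Dc N by simp
  have FJ: "F * ?J \<in> carrier_mat ?N ?N" using F Jc by simp
  have DF: "D * F \<in> carrier_mat ?N ?N" using F Dc by simp
  have "L * (F * ?J) = (L * Di) * (D * (F * ?J))"
  proof -
    have "(L * Di) * (D * (F * ?J)) = L * ((Di * D) * (F * ?J))" using Lc Dic Dc FJ
      by (simp del: assoc_mult_mat mult_carrier_mat add: sq)
    thus ?thesis using DiD left_mult_one_mat[OF FJ] by simp
  qed
  hence "frob_norm (L * (F * ?J)) \<le> spec_norm (L * Di) * frob_norm (D * (F * ?J))"
    using frob_mult_spec[of "L * Di" ?N ?N "D * (F * ?J)" ?N] Lc Dic Dc FJ N by simp
  also have "D * (F * ?J) = (D * F) * ?J" using Dc F Jc by simp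
  also have "frob_norm ((D * F) * ?J) = frob_norm (D * F)" by (rule frob_mult_J[OF DF])
  finally have b1: "frob_norm (L * (F * ?J)) \<le> spec_norm (L * Di) * frob_norm (D * F)" .
  define M where "M = E - F * ?J * transpose_mat F"
  have Ec: "E \<in> carrier_mat ?N ?N" using Edef Li dKc by simp
  have Q: "F * ?J * transpose_mat F \<in> carrier_mat ?N ?N" by (rule XJY_carrier[OF F F])
  have Mc: "M \<in> carrier_mat ?N ?N" unfolding M_def using Q by (rule minus_carrier_mat)
  have FM: "F = low M" using fx unfolding phi_def M_def by simp
  have "D * F = low (D * M)" unfolding FM by (rule diag_low[OF Dc Dd Mc])
  hence "frob_norm (D * F) \<le> frob_norm (D * M)" using frob_low by simp
  also have "D * M = D * E - D * (F * ?J * transpose_mat F)" unfolding M_def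
    by (rule mult_minus_distrib_mat[OF Dc Ec Q])
  also have "frob_norm (D * E - D * (F * ?J * transpose_mat F)) \<le> frob_norm (D * E) + frob_norm (D * (F * ?J * transpose_mat F))"
    by (rule frob_diff) (use Dc Ec Q in auto)
  also have "frob_norm (D * E) \<le> spec_norm (D * Li) * (s * \<epsilon>)"
  proof -
    have "D * E = (D * Li) * (\<Delta>K * transpose_mat Li)" unfolding Edef
    proof -
      have LiT: "transpose_mat Li \<in> carrier_mat ?N ?N" using Li by simp
      show "D * (Li * \<Delta>K * transpose_mat Li) = D * Li * (\<Delta>K * transpose_mat Li)"
        using Dc Li(1) dKc LiT by (simp del: assoc_mult_mat mult_carrier_mat transpose_carrier_mat add: sq)
    qed
    hence "frob_norm (D * E) \<le> spec_norm (D * Li) * frob_norm (\<Delta>K * transpose_mat Li)"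
      using frob_mult_spec[of "D * Li" ?N ?N "\<Delta>K * transpose_mat Li" ?N] Dc Li dKc N by simp
    also have "frob_norm (\<Delta>K * transpose_mat Li) \<le> s * \<epsilon>"
      unfolding s_def \<epsilon>_def by (rule frob_tr_bound[OF dKc Li(1) N])
    finally show ?thesis using sDL by (meson mult_left_mono order_trans \<open>frob_norm (\<Delta>K * transpose_mat Li) \<le> s * \<epsilon>\<close> \<open>frob_norm (D * E) \<le> spec_norm (D * Li) * frob_norm (\<Delta>K * transpose_mat Li)\<close>)
  qed
  also have "frob_norm (D * (F * ?J * transpose_mat F)) \<le> frob_norm (D * F) * frob_norm F"
  proof -
    have "D * (F * ?J * transpose_mat F) = (D * F) * ?J * transpose_mat F"
    proof -
      have FT: "transpose_mat F \<in> carrier_mat ?N ?N" using F by simp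
      show ?thesis using Dc F Jc FT by (simp del: assoc_mult_mat mult_carrier_mat transpose_carrier_mat add: sq)
    qed
    thus ?thesis using XJY_frob[OF DF F N] by simp
  qed
  finally have y: "frob_norm (D * F) \<le> spec_norm (D * Li) * (s * \<epsilon>) + frob_norm (D * F) * frob_norm F" by simp
  have y2: "frob_norm (D * F) * (1 - g) \<le> spec_norm (D * Li) * (s * \<epsilon>)"
  proof -
    have "frob_norm (D * F) * frob_norm F \<le> frob_norm (D * F) * g"
      using Fb frob_nonneg[of "D * F"] by (rule mult_left_mono)
    thus ?thesis using y by (simp add: algebra_simps)
  qed
  have y3: "frob_norm (D * F) \<le> spec_norm (D * Li) * (s * \<epsilon>) / (1 - g)"
    using y2 g1 by (simp add: le_divide_eq)
  have "frob_norm (L * (F * ?J)) \<le> spec_norm (L * Di) * (spec_norm (D * Li) * (s * \<epsilon>) / (1 - g))"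
    using b1 mult_left_mono[OF y3 sLD] by linarith
  also have "\<dots> = kappa2 (L * Di) * (s * \<epsilon> / (1 - g))" unfolding kap by simp
  finally show ?thesis unfolding Di_def s_def \<epsilon>_def .
qed



lemma kappa_nonneg:
  assumes N: "N > 0" and Lc: "L \<in> carrier_mat N N"
    and Li: "Li \<in> carrier_mat N N" "L * Li = 1\<^sub>m N" "Li * L = 1\<^sub>m N"
    and D: "D \<in> pos_diag_mats N"
  shows "kappa2 (L * inv_mat D) \<ge> 0"
proof -
  have Dc: "D \<in> carrier_mat N N" using D unfolding pos_diag_mats_def by auto
  note Dp = diag_inv[OF D]
  define Di where "Di = inv_mat D"
  have Dic: "Di \<in> carrier_mat N N" and DDi: "D * Di = 1\<^sub>m N" and DiD: "Di * D = 1\<^sub>m N"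
    using Dp unfolding Di_def by auto
  note sq = sqassoc sqcarrier
  have inv1: "inv_mat (L * Di) = D * Li"
  proof (rule inv_mat_unique)
    show "L * Di \<in> carrier_mat N N" "D * Li \<in> carrier_mat N N" using Lc Dic Dc Li by auto
    have "L * Di * (D * Li) = L * ((Di * D) * Li)" using Lc Dic Dc Li(1)
      by (simp del: assoc_mult_mat mult_carrier_mat add: sq)
    thus "L * Di * (D * Li) = 1\<^sub>m N" using DiD Li Lc by simp
    have "D * Li * (L * Di) = D * ((Li * L) * Di)" using Lc Dic Dc Li(1)
      by (simp del: assoc_mult_mat mult_carrier_mat add: sq)
    thus "D * Li * (L * Di) = 1\<^sub>m N" using DDi Li Dc Dic by simp
  qed
  have sLD: "spec_norm (L * Di) \<ge> 0" using spec_nonneg[of "L * Di"] Lc Dic N by simp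
  have sDL: "spec_norm (D * Li) \<ge> 0" using spec_nonneg[of "D * Li"] Li Dc N by simp
  show ?thesis unfolding kappa2_def Di_def[symmetric] inv1 using sLD sDL by simp
qed

theorem theorem3p1:
  fixes m n :: nat and A B C K L \<Delta>K :: "real mat"
  assumes "m \<ge> 1" and "n \<ge> 1"
    and "A \<in> carrier_mat m m" and "pos_def_mat A"
    and "B \<in> carrier_mat n m" and "vec_space.rank n B = n"
    and "C \<in> carrier_mat n n" and "pos_semidef_mat C"
    and "K = four_block_mat A (transpose_mat B) B (- C)"
    and "gen_chol_factor m n K L"
    and "\<Delta>K \<in> carrier_mat (m + n) (m + n)" and "symmetric_mat \<Delta>K"
    and "(spec_norm (inv_mat L))\<^sup>2 * frob_norm \<Delta>K < 1 / 2"
  shows "\<exists>\<Delta>L. \<Delta>L \<in> carrier_mat (m + n) (m + n) \<and>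
     gen_chol_factor m n (K + \<Delta>K) (L + \<Delta>L) \<and>
     frob_norm \<Delta>L \<le>
       sqrt 2 * spec_norm (inv_mat L) * (INF D \<in> pos_diag_mats (m + n). kappa2 (L * inv_mat D))
       / (sqrt 2 - 1 + sqrt (1 - 2 * (spec_norm (inv_mat L))\<^sup>2 * frob_norm \<Delta>K)) * frob_norm \<Delta>K \<and>
     sqrt 2 * spec_norm (inv_mat L) * (INF D \<in> pos_diag_mats (m + n). kappa2 (L * inv_mat D))
       / (sqrt 2 - 1 + sqrt (1 - 2 * (spec_norm (inv_mat L))\<^sup>2 * frob_norm \<Delta>K)) * frob_norm \<Delta>K
     \<le> (2 + sqrt 2) * spec_norm (inv_mat L) * (INF D \<in> pos_diag_mats (m + n). kappa2 (L * inv_mat D))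
       * frob_norm \<Delta>K"
proof -
  let ?J = "Jmat m n" and ?N = "m + n"
  have N: "m + n > 0" using assms(1) by simp
  obtain L11 L21 L22 where blk: "L11 \<in> carrier_mat m m" "L21 \<in> carrier_mat n m" "L22 \<in> carrier_mat n n"
        "lower_triangular_mat L11" "invertible_mat L11"
        "lower_triangular_mat L22" "invertible_mat L22"
        "L = four_block_mat L11 (0\<^sub>m m n) L21 L22" and KL: "K = L * ?J * transpose_mat L"
    using assms(10) unfolding gen_chol_factor_def by blast
  note Ls = gen_chol_struct[OF blk]
  have Linv: "invertible_mat L" using lt_invertible_iff[OF Ls(1) Ls(2)] Ls(3) by simp
  define Li where "Li = inv_mat L"
  have Lip: "Li \<in> carrier_mat ?N ?N" "L * Li = 1\<^sub>m ?N" "Li * L = 1\<^sub>m ?N"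
    using inv_mat_props[OF Ls(1) Linv] unfolding Li_def by auto
  have dKc: "\<Delta>K \<in> carrier_mat ?N ?N" by (rule assms(11))
  have dKs: "transpose_mat \<Delta>K = \<Delta>K" using assms(12) unfolding symmetric_mat_def by simp
  define E where "E = Li * \<Delta>K * transpose_mat Li"
  have Ec: "E \<in> carrier_mat ?N ?N" using Lip dKc unfolding E_def by simp
  have Es: "transpose_mat E = E" unfolding E_def by (rule sym_E[OF Lip(1) dKc dKs])
  define s where "s = spec_norm Li"
  define \<epsilon> where "\<epsilon> = frob_norm \<Delta>K"
  define t where "t = s\<^sup>2 * \<epsilon>"
  have s0: "s \<ge> 0" unfolding s_def using spec_nonneg[of Li] Lip N by simp
  have e0: "\<epsilon> \<ge> 0" unfolding \<epsilon>_def by (rule frob_nonneg)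
  have t0: "t \<ge> 0" unfolding t_def using s0 e0 by simp
  have ht: "t < 1/2" using assms(13) unfolding t_def s_def \<epsilon>_def Li_def .
  have hE: "frob_norm E \<le> t"
  proof -
    have LiT: "transpose_mat Li \<in> carrier_mat ?N ?N" using Lip by simp
    have "E = Li * (\<Delta>K * transpose_mat Li)" unfolding E_def using Lip(1) dKc LiT
      by (simp del: assoc_mult_mat mult_carrier_mat transpose_carrier_mat add: sqassoc sqcarrier)
    hence "frob_norm E \<le> s * frob_norm (\<Delta>K * transpose_mat Li)"
      using frob_mult_spec[of Li ?N ?N "\<Delta>K * transpose_mat Li" ?N] Lip dKc N unfolding s_def by simp
    also have "\<dots> \<le> s * (s * \<epsilon>)"
      using frob_tr_bound[OF dKc Lip(1) N] s0 unfolding s_def \<epsilon>_def by (intro mult_left_mono) auto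
    finally show ?thesis unfolding t_def by (simp add: power2_eq_square mult.assoc)
  qed
  define g where "g = (1 - sqrt (1 - 2*t)) / sqrt 2"
  note gf = g_facts[OF t0 ht, folded g_def]
  obtain F where F: "F \<in> carrier_mat ?N ?N" and fx: "phi m n E F = F" and Fb: "frob_norm F \<le> g"
    using fixpoint[OF Ec Es N hE ht] unfolding g_def by blast
  define \<Delta>L where "\<Delta>L = L * (F * ?J)"
  have dLc: "\<Delta>L \<in> carrier_mat ?N ?N" unfolding \<Delta>L_def using Ls(1) F J_carrier[of m n] by simp
  have struct: "gen_chol_factor m n (K + \<Delta>K) (L + \<Delta>L)"
    unfolding \<Delta>L_def
    by (rule main_struct[OF N Ls(1) Ls(2) Ls(3) KL dKc dKs Lip E_def F fx]) (use Fb gf in simp)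
  have bnd: "frob_norm \<Delta>L \<le> kappa2 (L * inv_mat D) * (s * \<epsilon> / (1 - g))" if D: "D \<in> pos_diag_mats ?N" for D
    unfolding \<Delta>L_def s_def \<epsilon>_def by (rule main_bound[OF N Ls(1) dKc Lip E_def F fx Fb gf(4) D])
  have kn: "kappa2 (L * inv_mat D) \<ge> 0" if D: "D \<in> pos_diag_mats ?N" for D
    by (rule kappa_nonneg[OF N Ls(1) Lip D])
  define I where "I = (INF D \<in> pos_diag_mats ?N. kappa2 (L * inv_mat D))"
  have ne: "pos_diag_mats ?N \<noteq> {}" using one_pos_diag by auto
  have I0: "I \<ge> 0" unfolding I_def by (rule cINF_greatest[OF ne kn])
  define r where "r = sqrt (1 - 2 * s\<^sup>2 * \<epsilon>)"
  have r0: "r \<ge> 0" unfolding r_def using ht unfolding t_def by simp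
  have rg: "g = (1 - r) / sqrt 2" unfolding g_def r_def t_def by (simp add: mult.assoc)
  have s2: "sqrt 2 > (1::real)" by simp
  have den: "sqrt 2 - 1 + r > 0" using s2 r0 by linarith
  have g1: "1 - g = (sqrt 2 - 1 + r) / sqrt 2" unfolding rg by (simp add: field_simps)
  define Q where "Q = s * \<epsilon> / (1 - g)"
  have Q0: "Q \<ge> 0" unfolding Q_def using s0 e0 gf(4) by simp
  have AQ: "sqrt 2 * s * I / (sqrt 2 - 1 + r) * \<epsilon> = Q * I"
    unfolding Q_def g1 using den by (simp add: field_simps)
  have first: "frob_norm \<Delta>L \<le> Q * I"
  proof (cases "Q = 0")
    case True
    have "frob_norm \<Delta>L \<le> kappa2 (L * inv_mat (1\<^sub>m ?N)) * Q" using bnd[OF one_pos_diag] unfolding Q_def by simp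
    thus ?thesis using True by simp
  next
    case False
    hence Qp: "Q > 0" using Q0 by simp
    have "frob_norm \<Delta>L / Q \<le> kappa2 (L * inv_mat D)" if D: "D \<in> pos_diag_mats ?N" for D
      using bnd[OF D] Qp unfolding Q_def[symmetric] by (simp add: divide_le_eq)
    hence "frob_norm \<Delta>L / Q \<le> I" unfolding I_def by (intro cINF_greatest[OF ne])
    thus ?thesis using Qp by (simp add: divide_le_eq mult.commute)
  qed
  have second: "sqrt 2 * s * I / (sqrt 2 - 1 + r) * \<epsilon> \<le> (2 + sqrt 2) * s * I * \<epsilon>"
  proof -
    have x0: "s * I * \<epsilon> \<ge> 0" using s0 I0 e0 by simp
    have ss: "sqrt 2 * sqrt 2 = (2::real)" by simp
    have e: "(2 + sqrt 2) * (sqrt 2 - 1) = sqrt 2" using ss by (simp add: algebra_simps)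
    have le: "(2 + sqrt 2) * (sqrt 2 - 1) \<le> (2 + sqrt 2) * (sqrt 2 - 1 + r)"
      using r0 by (intro mult_left_mono) auto
    hence "sqrt 2 \<le> (2 + sqrt 2) * (sqrt 2 - 1 + r)" using e by simp
    hence "sqrt 2 / (sqrt 2 - 1 + r) \<le> 2 + sqrt 2" using den by (simp add: divide_le_eq)
    hence "sqrt 2 / (sqrt 2 - 1 + r) * (s * I * \<epsilon>) \<le> (2 + sqrt 2) * (s * I * \<epsilon>)"
      using x0 by (rule mult_right_mono)
    thus ?thesis by (simp add: field_simps)
  qed
  have main: "frob_norm \<Delta>L \<le> sqrt 2 * s * I / (sqrt 2 - 1 + r) * \<epsilon>" using first AQ by simp
  show ?thesis
    using dLc struct main second unfolding I_def r_def s_def \<epsilon>_def Li_def by blast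
qed


end
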